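(* Suppose that (G), (Q), (M1) and (M2) hold. Then every invariant probability measure $\pi$ of the Markov chain $\{X_t\}_{t\in\mathbb N}$ satisfies $\int_{\mathcal H}\|x\|_{\mathcal H}\,\pi(dx)<\infty$.
   Context: Let $D=[0,1]^d$, $\mathcal H=L^2(D)$ (real) with norm $\|\cdot\|_{\mathcal H}$; $\|\cdot\|_{\mathcal L}$ is the operator norm. On a filtered probability space consider the NFAR model $X_{t+1}=\Psi_0(X_t)+\xi_t$, $t\in\mathbb N$, with $\Psi_0:\mathcal H\to\mathcal H$ measurable, $(X_t)$ adapted, $\{\xi_t\}$ i.i.d. mean-zero $\mathcal H$-valued with $\xi_t$ $\mathcal F_{t+1}$-measurable and independent of $\mathcal F_t$; $Q$ is the (trace-class) covariance operator of $\xi_1$. Assumptions: (G) $\xi_t\sim\mathcal N(0,Q)$; (Q) $\overline{\mathrm{Im}(Q)}=\mathcal H$; (M1) $\Psi_0=Q\circ m_0$ for some measurable $m_0:\mathcal H\to\mathcal H$; (M2) there exist $c_1,c_2>0$ with $c_1\|Q\|_{\mathcal L}<1$ and $\|m_0(x)\|_{\mathcal H}\le c_1\|x\|_{\mathcal H}+c_2$ for all $x\in\mathcal H$. An invariant measure $\pi$ is a probability measure on $\mathcal H$ with $\int\mathbb P(X_2\in A\mid X_1=x)\pi(dx)=\pi(A)$ for all Borel $A$. *)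

theory Defs
  imports "HOL-Probability.Probability"
begin

definition real_normal_measure :: "real \<Rightarrow> real measure" where
  "real_normal_measure v =
     (if v = 0 then return borel 0 else density lborel (normal_density 0 (sqrt v)))"

definition gaussian_measure :: "'a::{real_inner,polish_space} measure \<Rightarrow> ('a \<Rightarrow>\<^sub>L 'a) \<Rightarrow> bool" where
  "gaussian_measure \<mu> Q \<longleftrightarrow> prob_space \<mu> \<and> sets \<mu> = sets borel \<and>
     (\<forall>h. distr \<mu> borel (\<lambda>x. h \<bullet> x) = real_normal_measure (blinfun_apply Q h \<bullet> h))"

definition orthonormal_basis :: "'a::real_inner set \<Rightarrow> bool" where
  "orthonormal_basis B \<longleftrightarrow> (\<forall>e\<in>B. norm e = 1) \<and> (\<forall>e\<in>B. \<forall>f\<in>B. e \<noteq> f \<longrightarrow> e \<bullet> f = 0)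
     \<and> closure (span B) = UNIV"

definition trace_class_covariance :: "('a::{real_inner,polish_space} \<Rightarrow>\<^sub>L 'a) \<Rightarrow> bool" where
  "trace_class_covariance Q \<longleftrightarrow>
     (\<forall>x y. blinfun_apply Q x \<bullet> y = x \<bullet> blinfun_apply Q y) \<and>
     (\<forall>x. 0 \<le> blinfun_apply Q x \<bullet> x) \<and>
     (\<exists>B. orthonormal_basis B \<and> (\<lambda>e. blinfun_apply Q e \<bullet> e) summable_on B)"

text \<open>Transition kernel of the NFAR chain X_{t+1} = \<Psi>(X_t) + \<xi>_t, evaluated at time 1:
  P(X_2 \<in> A | X_1 = x) = P(\<Psi> x + \<xi>_1 \<in> A), since \<xi>_1 is independent of F_1.\<close>

definition nfar_kernel :: "'w measure \<Rightarrow> (nat \<Rightarrow> 'w \<Rightarrow> 'a::real_normed_vector) \<Rightarrow> ('a \<Rightarrow> 'a) \<Rightarrow> 'a \<Rightarrow> 'a set \<Rightarrow> ennreal" where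
  "nfar_kernel M \<xi> \<Psi> x A = emeasure M {\<omega> \<in> space M. \<Psi> x + \<xi> 1 \<omega> \<in> A}"

definition invariant_measure :: "'w measure \<Rightarrow> (nat \<Rightarrow> 'w \<Rightarrow> 'a::{real_normed_vector}) \<Rightarrow> ('a \<Rightarrow> 'a) \<Rightarrow> 'a measure \<Rightarrow> bool" where
  "invariant_measure M \<xi> \<Psi> \<pi> \<longleftrightarrow> prob_space \<pi> \<and> sets \<pi> = sets borel \<and>
     (\<forall>A\<in>sets borel. (\<integral>\<^sup>+ x. nfar_kernel M \<xi> \<Psi> x A \<partial>\<pi>) = emeasure \<pi> A)"

end

theory Submission imports Defs begin

lemma ortho_approx:
  fixes B :: "'a::real_inner set" and x :: 'a
  assumes ob: "orthonormal_basis B" and e: "e > 0"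
  shows "\<exists>F. finite F \<and> F \<subseteq> B \<and> norm x ^ 2 \<le> (\<Sum>f\<in>F. (f \<bullet> x)^2) + e"
proof -
  have n1: "\<And>a. a \<in> B \<Longrightarrow> a \<bullet> a = 1" using ob unfolding orthonormal_basis_def
    by (simp add: norm_eq_1)
  have o0: "\<And>a b. a \<in> B \<Longrightarrow> b \<in> B \<Longrightarrow> a \<noteq> b \<Longrightarrow> a \<bullet> b = 0" using ob unfolding orthonormal_basis_def
    by blast
  have "x \<in> closure (span B)" using ob unfolding orthonormal_basis_def by simp
  then obtain y where y: "y \<in> span B" "dist y x < sqrt e"
    using e by (meson closure_approachable real_sqrt_gt_0_iff)
  then obtain T r where T: "finite T" "T \<subseteq> B" "y = (\<Sum>a\<in>T. r a *\<^sub>R a)"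
    unfolding span_explicit by blast
  have xy: "x \<bullet> y = (\<Sum>a\<in>T. r a * (a \<bullet> x))"
    by (simp add: T(3) inner_sum_right inner_commute)
  have inner_b: "(\<Sum>b\<in>T. r b * (a \<bullet> b)) = r a" if "a \<in> T" for a
  proof -
    have "(\<Sum>b\<in>T. r b * (a \<bullet> b)) = (\<Sum>b\<in>T. if b = a then r a else 0)"
    proof (intro sum.cong refl)
      fix b assume b: "b \<in> T"
      show "r b * (a \<bullet> b) = (if b = a then r a else 0)"
        using b that T(2) n1 o0[of a b] by (cases "b = a") auto
    qed
    also have "\<dots> = r a" using T(1) that by simp
    finally show ?thesis .
  qed
  have yy: "y \<bullet> y = (\<Sum>a\<in>T. (r a)^2)"
  proof -
    have "y \<bullet> y = (\<Sum>a\<in>T. r a * (\<Sum>b\<in>T. r b * (a \<bullet> b)))"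
      unfolding T(3) inner_sum_left inner_sum_right sum_distrib_left by (intro sum.cong refl) (simp add: algebra_simps inner_commute)
    also have "\<dots> = (\<Sum>a\<in>T. (r a)^2)"
      by (intro sum.cong) (auto simp: inner_b power2_eq_square)
    finally show ?thesis .
  qed
  have "norm (x - y) ^ 2 = x \<bullet> x - 2 * (x \<bullet> y) + y \<bullet> y"
    by (simp add: power2_norm_eq_inner inner_diff_left inner_diff_right inner_commute)
  also have "\<dots> = norm x ^ 2 - (\<Sum>a\<in>T. (a \<bullet> x)^2) + (\<Sum>a\<in>T. (r a - a \<bullet> x)^2)"
    unfolding xy yy power2_norm_eq_inner
    by (simp add: power2_diff sum.distrib sum_subtractf sum_distrib_left algebra_simps)
  finally have eq: "norm (x - y) ^ 2 = norm x ^ 2 - (\<Sum>a\<in>T. (a \<bullet> x)^2) + (\<Sum>a\<in>T. (r a - a \<bullet> x)^2)" .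
  have "(\<Sum>a\<in>T. (r a - a \<bullet> x)^2) \<ge> 0" by (intro sum_nonneg) auto
  moreover have "norm (x - y) ^ 2 < e"
  proof -
    have "norm (x - y) < sqrt e" using y(2) by (simp add: dist_norm norm_minus_commute)
    then have "norm (x - y) ^ 2 < sqrt e ^ 2"
      by (intro power_strict_mono) auto
    then show ?thesis using e by simp
  qed
  ultimately have "norm x ^ 2 \<le> (\<Sum>a\<in>T. (a \<bullet> x)^2) + e" using eq by linarith
  then show ?thesis using T by blast
qed

lemma countable_ob:
  fixes B :: "'a::{real_inner,polish_space} set"
  assumes ob: "orthonormal_basis B"
  shows "countable B"
proof -
  have n1: "\<And>a. a \<in> B \<Longrightarrow> a \<bullet> a = 1" using ob unfolding orthonormal_basis_def
    by (simp add: norm_eq_1)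
  have o0: "\<And>a b. a \<in> B \<Longrightarrow> b \<in> B \<Longrightarrow> a \<noteq> b \<Longrightarrow> a \<bullet> b = 0" using ob unfolding orthonormal_basis_def
    by blast
  have far: "dist a b \<ge> 1" if "a \<in> B" "b \<in> B" "a \<noteq> b" for a b
  proof -
    have "dist a b ^ 2 = 2"
      using n1[OF that(1)] n1[OF that(2)] o0[OF that] 
      by (simp add: dist_norm power2_norm_eq_inner inner_diff_left inner_diff_right inner_commute)
    show ?thesis
    proof (rule ccontr)
      assume "\<not> 1 \<le> dist a b"
      then have "dist a b ^ 2 \<le> 1 ^ 2" by (intro power_mono) auto
      then show False using \<open>dist a b ^ 2 = 2\<close> by simp
    qed
  qed
  have "countable ((\<lambda>e. ball e (1/2)) ` B)"
  proof (rule countable_disjoint_open_subsets)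
    show "pairwise disjnt ((\<lambda>e. ball e (1/2)) ` B)"
    proof (rule pairwise_imageI)
      fix a b assume ab: "a \<in> B" "b \<in> B" "a \<noteq> b" "ball a (1/2) \<noteq> ball b (1/2)"
      show "disjnt (ball a (1/2)) (ball b (1/2))"
        unfolding disjnt_def
      proof (rule ccontr)
        assume "ball a (1 / 2) \<inter> ball b (1 / 2) \<noteq> {}"
        then obtain z where "dist a z < 1/2" "dist b z < 1/2" by auto
        then have "dist a b < 1" by (metis dist_commute dist_triangle_half_l)
        then show False using far[OF ab(1-3)] by simp
      qed
    qed
  qed auto
  moreover have "inj_on (\<lambda>e. ball e (1/2)) B"
  proof (rule inj_onI)
    fix a b assume ab: "a \<in> B" "b \<in> B" "ball a (1/2) = ball b (1/2)"
    then have "a \<in> ball b (1/2)" by (metis centre_in_ball divide_pos_pos zero_less_numeral zero_less_one)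
    then show "a = b" using far[OF ab(1,2)] by (cases "a = b") (auto simp: dist_commute)
  qed
  ultimately show ?thesis by (rule countable_image_inj_on)
qed

lemma real_normal_sq:
  assumes "v \<ge> 0"
  shows "(\<integral>\<^sup>+ t. ennreal (t^2) \<partial>(real_normal_measure v)) = ennreal v"
proof (cases "v = 0")
  case True
  then show ?thesis by (simp add: real_normal_measure_def nn_integral_return)
next
  case False
  then have vp: "v > 0" using assms by simp
  have "(\<integral>\<^sup>+ t. ennreal (t^2) \<partial>(real_normal_measure v)) =
        (\<integral>\<^sup>+ t. ennreal (normal_density 0 (sqrt v) t * (t - 0) ^ (2 * 1)) \<partial>lborel)"
    using False by (simp add: real_normal_measure_def nn_integral_density ennreal_mult'[symmetric])
  also have "\<dots> = ennreal (\<integral>t. normal_density 0 (sqrt v) t * (t - 0) ^ (2 * 1) \<partial>lborel)"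
    by (rule nn_integral_eq_integral[OF integrable_normal_moment]) (use vp in auto)
  also have "\<dots> = ennreal (fact (2 * 1) / ((2 / (sqrt v)\<^sup>2)^1 * fact 1))"
    by (subst integral_normal_moment_even) (use vp in auto)
  also have "\<dots> = ennreal v" using vp by simp
  finally show ?thesis .
qed

lemma gauss_sq:
  fixes \<mu> :: "'a::{real_inner,polish_space} measure"
  assumes g: "gaussian_measure \<mu> Q" and tc: "trace_class_covariance Q"
  shows "(\<integral>\<^sup>+x. ennreal (norm x ^ 2) \<partial>\<mu>) < \<infinity>"
proof -
  have ps: "prob_space \<mu>" and s\<mu>: "sets \<mu> = sets borel"
    and dist: "\<And>h. distr \<mu> borel (\<lambda>x. h \<bullet> x) = real_normal_measure (blinfun_apply Q h \<bullet> h)"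
    using g unfolding gaussian_measure_def by auto
  define q where "q e = blinfun_apply Q e \<bullet> e" for e
  have q0: "q e \<ge> 0" for e using tc unfolding trace_class_covariance_def q_def by auto
  obtain B where ob: "orthonormal_basis B" and summ: "q summable_on B"
    using tc unfolding trace_class_covariance_def q_def by auto
  have meas_inner[measurable]: "(\<lambda>x. e \<bullet> x) \<in> borel_measurable \<mu>" for e
  proof -
    have "(\<lambda>x. e \<bullet> x) \<in> borel_measurable borel" by (intro borel_measurable_continuous_onI continuous_intros)
    then show ?thesis by (simp only: measurable_cong_sets[OF s\<mu> refl])
  qed
  have each: "(\<integral>\<^sup>+x. ennreal ((e \<bullet> x)^2) \<partial>\<mu>) = ennreal (q e)" for e
  proof -
    have "(\<integral>\<^sup>+x. ennreal ((e \<bullet> x)^2) \<partial>\<mu>) = (\<integral>\<^sup>+t. ennreal (t^2) \<partial>(distr \<mu> borel (\<lambda>x. e \<bullet> x)))"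
      by (subst nn_integral_distr) auto
    also have "\<dots> = ennreal (q e)"
      unfolding dist q_def using q0[of e] by (simp add: q_def real_normal_sq)
    finally show ?thesis .
  qed
  have cB: "countable B" using ob by (rule countable_ob)
  show ?thesis
  proof (cases "B = {}")
    case True
    then have "closure (span B) = {0}" by simp
    then have z: "norm (x::'a) = 0" for x using ob unfolding orthonormal_basis_def
      by (metis UNIV_I norm_zero singletonD)
    have "(\<integral>\<^sup>+x. ennreal (norm x ^ 2) \<partial>\<mu>) = (\<integral>\<^sup>+x. 0 \<partial>\<mu>)"
      by (intro nn_integral_cong) (simp only: z, simp)
    then show ?thesis by simp
  next
    case False
    define F where "F n = from_nat_into B ` {..<n}" for n
    have FB: "F n \<subseteq> B" for n unfolding F_def using False by (auto intro: from_nat_into)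
    have finF: "finite (F n)" for n unfolding F_def by simp
    have Fmono: "m \<le> n \<Longrightarrow> F m \<subseteq> F n" for m n unfolding F_def by auto
    define S where "S n x = (\<Sum>e\<in>F n. (e \<bullet> x)^2)" for n x
    have Smono: "m \<le> n \<Longrightarrow> S m x \<le> S n x" for m n x
      unfolding S_def by (intro sum_mono2 finF Fmono) auto
    have pw: "ennreal (norm x ^ 2) \<le> (SUP n. ennreal (S n x))" for x
    proof (rule ennreal_le_epsilon)
      fix \<epsilon> :: real assume "\<epsilon> > 0"
      then obtain G where G: "finite G" "G \<subseteq> B" "norm x ^ 2 \<le> (\<Sum>f\<in>G. (f \<bullet> x)^2) + \<epsilon>"
        using ortho_approx[OF ob] by blast
      define N where "N = Suc (Max (insert 0 (to_nat_on B ` G)))"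
      have "G \<subseteq> F N"
      proof
        fix g assume "g \<in> G"
        then have "to_nat_on B g < N" unfolding N_def using G(1) by (simp add: le_imp_less_Suc)
        moreover have "from_nat_into B (to_nat_on B g) = g" using \<open>g \<in> G\<close> G(2) cB
          by (auto intro: from_nat_into_to_nat_on)
        ultimately show "g \<in> F N" unfolding F_def by (metis imageI lessThan_iff)
      qed
      then have "(\<Sum>f\<in>G. (f \<bullet> x)^2) \<le> S N x" unfolding S_def by (intro sum_mono2 finF) auto
      then have "ennreal (norm x ^ 2) \<le> ennreal (S N x) + ennreal \<epsilon>"
      proof -
        have "norm x ^ 2 \<le> S N x + \<epsilon>" using G(3) \<open>(\<Sum>f\<in>G. (f \<bullet> x)^2) \<le> S N x\<close> by linarith
        then have "ennreal (norm x ^ 2) \<le> ennreal (S N x + \<epsilon>)" by (rule ennreal_leI)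
        moreover have "S N x \<ge> 0" unfolding S_def by (intro sum_nonneg) auto
        ultimately show ?thesis using \<open>\<epsilon> > 0\<close> by (simp add: ennreal_plus)
      qed
      also have "\<dots> \<le> (SUP n. ennreal (S n x)) + ennreal \<epsilon>"
        by (intro add_right_mono SUP_upper) auto
      finally show "ennreal (norm x ^ 2) \<le> (SUP n. ennreal (S n x)) + ennreal \<epsilon>" .
    qed
    have Smeas[measurable]: "(\<lambda>x. ennreal (S n x)) \<in> borel_measurable \<mu>" for n
      unfolding S_def by measurable
    have Sint: "(\<integral>\<^sup>+x. ennreal (S n x) \<partial>\<mu>) = ennreal (\<Sum>e\<in>F n. q e)" for n
    proof -
      have "(\<integral>\<^sup>+x. ennreal (S n x) \<partial>\<mu>) = (\<integral>\<^sup>+x. (\<Sum>e\<in>F n. ennreal ((e \<bullet> x)^2)) \<partial>\<mu>)"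
        unfolding S_def by (intro nn_integral_cong) (simp add: sum_ennreal)
      also have "\<dots> = (\<Sum>e\<in>F n. (\<integral>\<^sup>+x. ennreal ((e \<bullet> x)^2) \<partial>\<mu>))"
        by (intro nn_integral_sum) auto
      also have "\<dots> = ennreal (\<Sum>e\<in>F n. q e)" by (simp add: each sum_ennreal q0)
      finally show ?thesis .
    qed
    have Sle: "(\<Sum>e\<in>F n. q e) \<le> infsum q B" for n
    proof -
      have "(\<Sum>e\<in>F n. q e) = infsum q (F n)" using finF by simp
      also have "\<dots> \<le> infsum q B"
        using FB[of n] by (intro infsum_mono_neutral summ) (auto simp: finF q0)
      finally show ?thesis .
    qed
    have "(\<integral>\<^sup>+x. ennreal (norm x ^ 2) \<partial>\<mu>) \<le> (\<integral>\<^sup>+x. (SUP n. ennreal (S n x)) \<partial>\<mu>)"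
      by (intro nn_integral_mono pw)
    also have "\<dots> = (SUP n. (\<integral>\<^sup>+x. ennreal (S n x) \<partial>\<mu>))"
      by (intro nn_integral_monotone_convergence_SUP) (auto simp: incseq_def le_fun_def Smono intro!: ennreal_leI)
    also have "\<dots> \<le> ennreal (infsum q B)"
      unfolding Sint by (intro SUP_least ennreal_leI Sle)
    also have "\<dots> < \<infinity>" by simp
    finally show ?thesis .
  qed
qed

lemma inv_fun:
  fixes M :: "'w measure" and \<xi> :: "nat \<Rightarrow> 'w \<Rightarrow> 'a::{real_normed_vector,second_countable_topology}"
    and \<pi> :: "'a measure" and f :: "'a \<Rightarrow> ennreal"
  assumes ps: "prob_space M" and \<xi>m: "\<xi> 1 \<in> borel_measurable M"
    and \<Psi>m: "\<Psi> \<in> borel_measurable borel"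
    and inv: "invariant_measure M \<xi> \<Psi> \<pi>" and fm: "f \<in> borel_measurable borel"
  shows "(\<integral>\<^sup>+y. f y \<partial>\<pi>) = (\<integral>\<^sup>+x. (\<integral>\<^sup>+\<omega>. f (\<Psi> x + \<xi> 1 \<omega>) \<partial>M) \<partial>\<pi>)"
    and "(\<lambda>x. \<integral>\<^sup>+\<omega>. f (\<Psi> x + \<xi> 1 \<omega>) \<partial>M) \<in> borel_measurable \<pi>"
proof -
  interpret M: prob_space M by (rule ps)
  have s\<pi>: "sets \<pi> = sets borel" and inv': "\<And>A. A \<in> sets borel \<Longrightarrow> (\<integral>\<^sup>+ x. nfar_kernel M \<xi> \<Psi> x A \<partial>\<pi>) = emeasure \<pi> A"
    using inv unfolding invariant_measure_def by auto
  have sp\<pi>: "space \<pi> = UNIV" using sets_eq_imp_space_eq[OF s\<pi>] by simp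
  have \<Psi>m'[measurable]: "\<Psi> \<in> borel_measurable \<pi>" using \<Psi>m by (simp only: measurable_cong_sets[OF s\<pi> refl])
  note \<xi>m[measurable] fm[measurable]
  define G where "G p = \<Psi> (fst p) + \<xi> 1 (snd p)" for p
  have Gm[measurable]: "G \<in> borel_measurable (\<pi> \<Otimes>\<^sub>M M)" unfolding G_def by measurable
  have D: "distr (\<pi> \<Otimes>\<^sub>M M) borel G = \<pi>"
  proof (rule measure_eqI)
    show "sets (distr (\<pi> \<Otimes>\<^sub>M M) borel G) = sets \<pi>" using s\<pi> by simp
  next
    fix A assume "A \<in> sets (distr (\<pi> \<Otimes>\<^sub>M M) borel G)"
    then have A: "A \<in> sets borel" by simp
    have "emeasure (distr (\<pi> \<Otimes>\<^sub>M M) borel G) A = emeasure (\<pi> \<Otimes>\<^sub>M M) (G -` A \<inter> space (\<pi> \<Otimes>\<^sub>M M))"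
      using A by (simp add: emeasure_distr)
    also have "\<dots> = (\<integral>\<^sup>+x. emeasure M (Pair x -` (G -` A \<inter> space (\<pi> \<Otimes>\<^sub>M M))) \<partial>\<pi>)"
      using A by (intro M.emeasure_pair_measure_alt measurable_sets[OF Gm]) auto
    also have "\<dots> = (\<integral>\<^sup>+x. nfar_kernel M \<xi> \<Psi> x A \<partial>\<pi>)"
      unfolding nfar_kernel_def
      by (intro nn_integral_cong arg_cong2[where f=emeasure] refl) (auto simp: G_def space_pair_measure sp\<pi>)
    also have "\<dots> = emeasure \<pi> A" using inv' A by simp
    finally show "emeasure (distr (\<pi> \<Otimes>\<^sub>M M) borel G) A = emeasure \<pi> A" .
  qed
  have "(\<integral>\<^sup>+y. f y \<partial>\<pi>) = (\<integral>\<^sup>+y. f y \<partial>(distr (\<pi> \<Otimes>\<^sub>M M) borel G))" using D by simp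
  also have "\<dots> = (\<integral>\<^sup>+p. f (G p) \<partial>(\<pi> \<Otimes>\<^sub>M M))" by (rule nn_integral_distr) auto
  also have "\<dots> = (\<integral>\<^sup>+x. (\<integral>\<^sup>+\<omega>. f (G (x, \<omega>)) \<partial>M) \<partial>\<pi>)"
    by (rule M.nn_integral_fst[symmetric]) measurable
  finally show "(\<integral>\<^sup>+y. f y \<partial>\<pi>) = (\<integral>\<^sup>+x. (\<integral>\<^sup>+\<omega>. f (\<Psi> x + \<xi> 1 \<omega>) \<partial>M) \<partial>\<pi>)"
    by (simp add: G_def)
  have "(\<lambda>x. \<integral>\<^sup>+\<omega>. f (G (x, \<omega>)) \<partial>M) \<in> borel_measurable \<pi>"
    by (rule M.borel_measurable_nn_integral_fst[where f="\<lambda>p. f (G p)"]) measurable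
  then show "(\<lambda>x. \<integral>\<^sup>+\<omega>. f (\<Psi> x + \<xi> 1 \<omega>) \<partial>M) \<in> borel_measurable \<pi>"
    by (simp add: G_def)
qed

theorem lemmaA3:
  fixes M :: "'w measure"
    and \<xi> :: "nat \<Rightarrow> 'w \<Rightarrow> 'a::{real_inner,polish_space}"
    and Q :: "'a \<Rightarrow>\<^sub>L 'a"
    and \<Psi>0 m0 :: "'a \<Rightarrow> 'a"
    and c1 c2 :: real
    and \<pi> :: "'a measure"
  assumes "prob_space M"
    and "\<And>t. \<xi> t \<in> borel_measurable M"
    and "prob_space.indep_vars M (\<lambda>_. borel) \<xi> UNIV"
    and "trace_class_covariance Q"
    and G: "\<And>t. gaussian_measure (distr M borel (\<xi> t)) Q"
    and Qdense: "closure (range (blinfun_apply Q)) = UNIV"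
    and M1: "m0 \<in> borel_measurable borel" "\<Psi>0 = blinfun_apply Q \<circ> m0"
    and M2: "c1 > 0" "c2 > 0" "c1 * norm Q < 1" "\<And>x. norm (m0 x) \<le> c1 * norm x + c2"
    and inv: "invariant_measure M \<xi> \<Psi>0 \<pi>"
  shows "(\<integral>\<^sup>+ x. ennreal (norm x) \<partial>\<pi>) < \<infinity>"
proof -
  interpret M: prob_space M by fact
  have \<xi>m[measurable]: "\<xi> 1 \<in> borel_measurable M" by fact
  have ps\<pi>: "prob_space \<pi>" and s\<pi>: "sets \<pi> = sets borel"
    using inv unfolding invariant_measure_def by auto
  interpret P: prob_space \<pi> by (rule ps\<pi>)
  have meas\<pi>: "f \<in> borel_measurable \<pi>" if "f \<in> borel_measurable borel" for f :: "'a \<Rightarrow> ennreal"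
    using that by (simp only: measurable_cong_sets[OF s\<pi> refl])
  have Qm: "blinfun_apply Q \<in> borel_measurable borel"
    by (intro borel_measurable_continuous_onI linear_continuous_on blinfun.bounded_linear_right)
  have \<Psi>m: "\<Psi>0 \<in> borel_measurable borel"
    unfolding M1(2) by (rule measurable_comp[OF M1(1) Qm])
  define a where "a = norm Q * c1"
  define b where "b = norm Q * c2"
  have a1: "a < 1" using M2(3) by (simp add: a_def mult.commute)
  have b0: "b \<ge> 0" using M2(2) by (simp add: b_def)
  have \<Psi>bound: "norm (\<Psi>0 x) \<le> a * norm x + b" for x
  proof -
    have "norm (\<Psi>0 x) \<le> norm Q * norm (m0 x)" unfolding M1(2) by (simp add: norm_blinfun)
    also have "\<dots> \<le> norm Q * (c1 * norm x + c2)" by (intro mult_left_mono M2(4)) auto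
    finally show ?thesis by (simp add: a_def b_def algebra_simps)
  qed
  define E where "E = (\<integral>\<^sup>+\<omega>. ennreal (norm (\<xi> 1 \<omega>)) \<partial>M)"
  have Efin: "E < \<infinity>"
  proof -
    have "(\<integral>\<^sup>+\<omega>. ennreal (norm (\<xi> 1 \<omega>) ^ 2) \<partial>M) = (\<integral>\<^sup>+x. ennreal (norm x ^ 2) \<partial>(distr M borel (\<xi> 1)))"
      by (subst nn_integral_distr[OF \<xi>m]) auto
    also have "\<dots> < \<infinity>" by (rule gauss_sq[OF G \<open>trace_class_covariance Q\<close>])
    finally have sq: "(\<integral>\<^sup>+\<omega>. ennreal (norm (\<xi> 1 \<omega>) ^ 2) \<partial>M) < \<infinity>" .
    have m2: "(\<lambda>\<omega>. ennreal (norm (\<xi> 1 \<omega>) ^ 2)) \<in> borel_measurable M" by measurable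
    have "E \<le> (\<integral>\<^sup>+\<omega>. (1 + ennreal (norm (\<xi> 1 \<omega>) ^ 2)) \<partial>M)"
      unfolding E_def
    proof (intro nn_integral_mono)
      fix \<omega>
      define t where "t = norm (\<xi> 1 \<omega>)"
      have t0: "t \<ge> 0" unfolding t_def by simp
      have "0 \<le> (t - 1) * (t - 1)" by simp
      then have "0 \<le> t * t - 2 * t + 1" by (simp add: algebra_simps)
      then have tt: "t \<le> 1 + t ^ 2" using t0 by (simp add: power2_eq_square)
      have "ennreal t \<le> ennreal (1 + t ^ 2)" using tt by (rule ennreal_leI)
      also have "\<dots> = 1 + ennreal (t ^ 2)" by (simp add: ennreal_plus)
      finally show "ennreal (norm (\<xi> 1 \<omega>)) \<le> 1 + ennreal (norm (\<xi> 1 \<omega>) ^ 2)" unfolding t_def .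
    qed
    also have "\<dots> = 1 + (\<integral>\<^sup>+\<omega>. ennreal (norm (\<xi> 1 \<omega>) ^ 2) \<partial>M)"
      by (subst nn_integral_add[OF _ m2]) (auto simp: M.emeasure_space_1)
    also have "\<dots> < \<infinity>" using sq by simp
    finally show ?thesis .
  qed
  define c where "c n x = ennreal ((1 - a) * (if norm x \<le> real n then norm x else 0))" for n :: nat and x :: 'a
  have cm: "c n \<in> borel_measurable \<pi>" for n
    unfolding c_def by (intro meas\<pi>) measurable
  have trunc: "(\<integral>\<^sup>+x. c n x \<partial>\<pi>) \<le> ennreal b + E" for n
  proof -
    define K where "K = real n"
    define A where "A x = (\<integral>\<^sup>+\<omega>. ennreal (min (norm (\<Psi>0 x + \<xi> 1 \<omega>)) K) \<partial>M)" for x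
    have fm: "(\<lambda>y. ennreal (min (norm y) K)) \<in> borel_measurable borel" by measurable
    note IF = inv_fun[OF \<open>prob_space M\<close> \<xi>m \<Psi>m inv fm]
    have Am: "A \<in> borel_measurable \<pi>" using IF(2) unfolding A_def .
    have pw: "A x + c n x \<le> ennreal (min (norm x) K) + ennreal b + E" for x
    proof -
      have mA: "(\<lambda>\<omega>. ennreal (min (norm (\<Psi>0 x + \<xi> 1 \<omega>)) K)) \<in> borel_measurable M" by measurable
      have "A x + c n x = (\<integral>\<^sup>+\<omega>. (ennreal (min (norm (\<Psi>0 x + \<xi> 1 \<omega>)) K) + c n x) \<partial>M)"
        unfolding A_def by (subst nn_integral_add[OF mA]) (auto simp: M.emeasure_space_1)
      also have "\<dots> \<le> (\<integral>\<^sup>+\<omega>. (ennreal (min (norm x) K + b) + ennreal (norm (\<xi> 1 \<omega>))) \<partial>M)"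
      proof (intro nn_integral_mono)
        fix \<omega>
        let ?s = "norm (\<Psi>0 x + \<xi> 1 \<omega>)"
        let ?u = "norm x" and ?\<eta> = "norm (\<xi> 1 \<omega>)"
        have s: "?s \<le> a * ?u + b + ?\<eta>" using \<Psi>bound[of x] norm_triangle_ineq[of "\<Psi>0 x" "\<xi> 1 \<omega>"] by linarith
        have K0: "K \<ge> 0" unfolding K_def by simp
        have r: "min ?s K + (1 - a) * (if ?u \<le> K then ?u else 0) \<le> min ?u K + b + ?\<eta>"
        proof (cases "?u \<le> K")
          case True then show ?thesis using s by (simp add: algebra_simps)
        next
          case False
          have "min ?s K \<le> K" by simp
          moreover have "min ?u K = K" using False by simp
          moreover have "?\<eta> \<ge> 0" by simp
          moreover have "(1 - a) * (if ?u \<le> K then ?u else 0) = 0" using False by simp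
          ultimately show ?thesis using b0 by linarith
        qed
        have "ennreal (min ?s K) + c n x = ennreal (min ?s K + (1 - a) * (if ?u \<le> K then ?u else 0))"
          unfolding c_def K_def using a1 by (subst ennreal_plus) auto
        also have "\<dots> \<le> ennreal (min ?u K + b + ?\<eta>)" using r by (rule ennreal_leI)
        also have "\<dots> = ennreal (min ?u K + b) + ennreal ?\<eta>" using b0 K0 by (subst ennreal_plus) auto
        finally show "ennreal (min ?s K) + c n x \<le> ennreal (min ?u K + b) + ennreal ?\<eta>" .
      qed
      also have "\<dots> = ennreal (min (norm x) K + b) + E"
        unfolding E_def by (subst nn_integral_add) (use \<xi>m in \<open>auto simp: M.emeasure_space_1\<close>)
      also have "\<dots> = ennreal (min (norm x) K) + ennreal b + E"
        using b0 by (subst ennreal_plus) (auto simp: K_def)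
      finally show ?thesis .
    qed
    define I where "I = (\<integral>\<^sup>+y. ennreal (min (norm y) K) \<partial>\<pi>)"
    have Ifin: "I < \<infinity>"
    proof -
      have "I \<le> (\<integral>\<^sup>+y. ennreal K \<partial>\<pi>)" unfolding I_def by (intro nn_integral_mono ennreal_leI) auto
      also have "\<dots> = ennreal K" by (simp add: P.emeasure_space_1)
      also have "\<dots> < \<infinity>" by simp
      finally show ?thesis .
    qed
    have "I + (\<integral>\<^sup>+x. c n x \<partial>\<pi>) = (\<integral>\<^sup>+x. A x \<partial>\<pi>) + (\<integral>\<^sup>+x. c n x \<partial>\<pi>)"
      unfolding I_def IF(1) A_def ..
    also have "\<dots> = (\<integral>\<^sup>+x. (A x + c n x) \<partial>\<pi>)"
      by (rule nn_integral_add[symmetric]) (use Am cm in auto)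
    also have "\<dots> \<le> (\<integral>\<^sup>+x. (ennreal (min (norm x) K) + (ennreal b + E)) \<partial>\<pi>)"
      by (intro nn_integral_mono) (metis pw add.assoc)
    also have "\<dots> = I + (ennreal b + E)"
    proof -
      have m1: "(\<lambda>x. ennreal (min (norm x) K)) \<in> borel_measurable \<pi>" by (intro meas\<pi>) measurable
      show ?thesis unfolding I_def
        by (subst nn_integral_add[OF m1]) (auto simp: P.emeasure_space_1)
    qed
    finally have "I + (\<integral>\<^sup>+x. c n x \<partial>\<pi>) \<le> I + (ennreal b + E)" .
    then show ?thesis using Ifin unfolding ennreal_add_left_cancel_le by auto
  qed
  have "(\<integral>\<^sup>+x. ennreal ((1 - a) * norm x) \<partial>\<pi>) = (\<integral>\<^sup>+x. (SUP n. c n x) \<partial>\<pi>)"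
  proof (intro nn_integral_cong)
    fix x
    show "ennreal ((1 - a) * norm x) = (SUP n. c n x)"
    proof (rule antisym)
      obtain n :: nat where "norm x \<le> real n" using real_arch_simple by blast
      then have "c n x = ennreal ((1 - a) * norm x)" unfolding c_def by simp
      then show "ennreal ((1 - a) * norm x) \<le> (SUP n. c n x)" by (metis SUP_upper UNIV_I)
    next
      show "(SUP n. c n x) \<le> ennreal ((1 - a) * norm x)"
        unfolding c_def using a1 by (intro SUP_least ennreal_leI) auto
    qed
  qed
  also have "\<dots> = (SUP n. (\<integral>\<^sup>+x. c n x \<partial>\<pi>))"
  proof (rule nn_integral_monotone_convergence_SUP)
    show "incseq c"
      unfolding incseq_def le_fun_def c_def using a1
      by (auto intro!: ennreal_leI mult_left_mono)
  qed (use cm in auto)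
  also have "\<dots> \<le> ennreal b + E" by (intro SUP_least trunc)
  also have "\<dots> < \<infinity>" using Efin by simp
  finally have fin: "(\<integral>\<^sup>+x. ennreal ((1 - a) * norm x) \<partial>\<pi>) < \<infinity>" .
  have "(\<integral>\<^sup>+x. ennreal ((1 - a) * norm x) \<partial>\<pi>) = ennreal (1 - a) * (\<integral>\<^sup>+x. ennreal (norm x) \<partial>\<pi>)"
  proof -
    have nm: "(\<lambda>x. ennreal (norm x)) \<in> borel_measurable \<pi>" by (intro meas\<pi>) measurable
    show ?thesis using a1 by (subst nn_integral_cmult[symmetric, OF nm]) (auto simp: ennreal_mult)
  qed
  with fin a1 have "(\<integral>\<^sup>+ x. ennreal (norm x) \<partial>\<pi>) = 0 \<or> (\<integral>\<^sup>+ x. ennreal (norm x) \<partial>\<pi>) < \<infinity>"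
    by (simp add: ennreal_mult_less_top)
  then show ?thesis by auto
qed

end
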